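(* Let $s$ be a non-empty string with $r$ maximal runs. Every admissible bilateral run-peeling decomposition of $s$ emits at least $\lceil r/2\rceil$ tokens, and the Flashback decomposition attains this minimum: the number of tokens of $\mathcal{F}(s)$ other than the sentinel token $\tau_0=(\texttt{@}\texttt{\$},1)$ is exactly $\lceil r/2\rceil$.
   Context: A maximal run of a string is a maximal block of consecutive equal symbols. An admissible bilateral run-peeling decomposition of a non-empty string $s$ is obtained by repeatedly applying the following rule to an active span (initially all of $s$) until it is consumed: (Termination) if the active span consists of a single run or of two adjacent runs, emit one terminal token for the span and stop; (Peeling step) otherwise, let $L$ be the length of the span's leading run (longest prefix of one repeated symbol) and $R$ the length of its trailing run (longest suffix of one repeated symbol), choose any integers $x\in\{1,\dots,L\}$ and $y\in\{1,\dots,R\}$, emit one token formed by the peeled prefix of length $x$ and the peeled suffix of length $y$, and continue with the remaining middle as the active span. The Flashback decomposition $\mathcal{F}(s)$: let $\texttt{@},\texttt{\$}$ be distinct symbols not occurring in $s$, $\hat s=\texttt{@}\,s\,\texttt{\$}$ with positions $1,\dots,n+2$ ($n=|s|$), $\hat s[i..j)$ the substring at positions $i,\dots,j-1$. Starting from active span $[lo,hi)=[1,n+3)$: if $lo\ge hi$, stop. Let $\ell$ be the leading-run length of $\hat s[lo..hi)$. If $\ell=hi-lo$, append $(\hat s[lo..hi),0)$ and stop. Otherwise let $\hat s[r'..hi)$ be the trailing run of $\hat s[lo..hi)$ and $\sigma=\hat s[lo..lo+\ell)\cdot\hat s[r'..hi)$; if $lo+\ell\ge r'$, append $(\sigma,0)$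 and stop; otherwise append $(\sigma,\ell)$ and repeat with $[lo+\ell,r')$. *)

theory Defs
  imports Complex_Main
begin

text \<open>Number of maximal runs of a string (remdups_adj collapses each maximal run to one symbol).\<close>
definition runs :: "'a list \<Rightarrow> nat" where
  "runs s = length (remdups_adj s)"

definition lead_run :: "'a list \<Rightarrow> nat" where
  "lead_run xs = length (takeWhile (\<lambda>c. c = hd xs) xs)"

definition trail_run :: "'a list \<Rightarrow> nat" where
  "trail_run xs = length (takeWhile (\<lambda>c. c = last xs) (rev xs))"

datatype 'a token = Terminal "'a list" | Peeled "'a list" "'a list"

inductive admissible :: "'a list \<Rightarrow> 'a token list \<Rightarrow> bool" where
  terminate: "xs \<noteq> [] \<Longrightarrow> runs xs \<le> 2 \<Longrightarrow> admissible xs [Terminal xs]"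
| peel: "runs xs > 2 \<Longrightarrow> 1 \<le> x \<Longrightarrow> x \<le> lead_run xs \<Longrightarrow>
         1 \<le> y \<Longrightarrow> y \<le> trail_run xs \<Longrightarrow>
         admissible (drop x (take (length xs - y) xs)) ts \<Longrightarrow>
         admissible xs (Peeled (take x xs) (drop (length xs - y) xs) # ts)"

datatype 'a ext = At | Dollar | Sym 'a

text \<open>The substring at 1-based positions lo,...,hi-1.\<close>
definition substr :: "'b list \<Rightarrow> nat \<Rightarrow> nat \<Rightarrow> 'b list" where
  "substr w i j = take (j - i) (drop (i - 1) w)"

function flash :: "'b list \<Rightarrow> nat \<Rightarrow> nat \<Rightarrow> ('b list \<times> nat) list" where
  "flash w lo hi =
    (if lo = 0 \<or> lo \<ge> hi \<or> length w + 1 < hi then []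
     else let sp = substr w lo hi; l = lead_run sp in
       if l = hi - lo then [(sp, 0)]
       else let r' = hi - trail_run sp;
                \<sigma> = substr w lo (lo + l) @ substr w r' hi in
         if lo + l \<ge> r' then [(\<sigma>, 0)]
         else (\<sigma>, l) # flash w (lo + l) r')"
  by pat_completeness auto
termination
proof (relation "measure (\<lambda>(w, lo, hi). hi - lo)")
  fix w :: "'b list" and lo hi sp l r'
  assume a: "\<not> (lo = 0 \<or> hi \<le> lo \<or> length w + 1 < hi)" "sp = substr w lo hi" "l = lead_run sp" "r' = hi - trail_run sp"
    "\<not> lo + l \<ge> r'"
  then show "((w, lo + l, r'), w, lo, hi) \<in> measure (\<lambda>(w, lo, hi). hi - lo)"
  proof -
    have "sp \<noteq> []" using a by (auto simp: substr_def)
    then have "l \<ge> 1" unfolding a(3) by (cases sp) (auto simp: lead_run_def)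
    then show ?thesis using a by auto
  qed
qed auto

definition flashback :: "'a list \<Rightarrow> ('a ext list \<times> nat) list" where
  "flashback s = flash (At # map Sym s @ [Dollar]) 1 (length s + 3)"

definition sentinel_token :: "'a ext list \<times> nat" where
  "sentinel_token = ([At, Dollar], 1)"

end

theory Submission
  imports Defs
begin

declare flash.simps[simp del]

lemma runs_Cons_ge: "runs zs \<le> runs (x # zs)"
  unfolding runs_def by (auto simp: remdups_adj_Cons split: list.splits)

lemma runs_drop_le: "runs (drop k ys) \<le> runs ys"
proof (induction ys arbitrary: k)
  case (Cons y ys) then show ?case
    by (cases k) (auto intro: le_trans[OF _ runs_Cons_ge])
qed simp

lemma runs_dropWhile_le: "runs (dropWhile P ys) \<le> runs ys"
  unfolding dropWhile_eq_drop by (rule runs_drop_le)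

lemma runs_append_le: "runs (xs @ ys) \<le> runs xs + runs ys"
proof (cases "xs = []")
  case False then show ?thesis
    using remdups_adj_append''[OF False, of ys] runs_dropWhile_le[of _ ys]
    by (simp add: runs_def)
qed simp

lemma runs_append_eq: "xs = [] \<or> ys = [] \<or> last xs \<noteq> hd ys \<Longrightarrow> runs (xs @ ys) = runs xs + runs ys"
  by (simp add: runs_def remdups_adj_append')

lemma runs_rev[simp]: "runs (rev xs) = runs xs"
  by (simp add: runs_def)

lemma runs_const: "\<forall>c\<in>set xs. c = a \<Longrightarrow> runs xs \<le> 1"
proof -
  assume "\<forall>c\<in>set xs. c = a"
  then have "xs = replicate (length xs) a" by (simp add: replicate_length_same)
  then have "runs xs = runs (replicate (length xs) a)" by simp
  then show ?thesis by (simp add: runs_def remdups_adj_replicate)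
qed

lemma runs_pos: "xs \<noteq> [] \<Longrightarrow> runs xs \<ge> 1"
  by (simp add: runs_def)

lemma trail_run_rev: "trail_run xs = lead_run (rev xs)"
  by (cases xs rule: rev_cases) (auto simp: trail_run_def lead_run_def)

lemma lead_run_le: "lead_run xs \<le> length xs"
  by (simp add: lead_run_def length_takeWhile_le)

lemma trail_run_le: "trail_run xs \<le> length xs"
  unfolding trail_run_rev using lead_run_le[of "rev xs"] by simp

lemma lead_run_pos: "xs \<noteq> [] \<Longrightarrow> lead_run xs \<ge> 1"
  by (cases xs) (auto simp: lead_run_def)

lemma trail_run_pos: "xs \<noteq> [] \<Longrightarrow> trail_run xs \<ge> 1"
  using lead_run_pos[of "rev xs"] by (simp add: trail_run_rev)

lemma take_lead: "x \<le> lead_run xs \<Longrightarrow> \<forall>c\<in>set (take x xs). c = hd xs"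
proof -
  assume x: "x \<le> lead_run xs"
  define P where "P = (\<lambda>c. c = hd xs)"
  have T: "takeWhile P xs = take (lead_run xs) xs" unfolding lead_run_def P_def by (rule takeWhile_eq_take)
  have E: "take x (takeWhile P xs) = take x xs" using x by (simp add: T min_absorb1)
  show ?thesis
  proof
    fix c assume "c \<in> set (take x xs)"
    then have "c \<in> set (takeWhile P xs)" unfolding E[symmetric] by (rule in_set_takeD)
    then show "c = hd xs" using set_takeWhileD unfolding P_def by fastforce
  qed
qed

lemma drop_trail: "y \<le> trail_run xs \<Longrightarrow> \<forall>c\<in>set (drop (length xs - y) xs). c = last xs"
proof -
  assume "y \<le> trail_run xs"
  then have "\<forall>c\<in>set (take y (rev xs)). c = hd (rev xs)"
    by (cases "xs = []") (auto simp: trail_run_rev intro!: take_lead[simplified])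
  moreover have "set (take y (rev xs)) = set (drop (length xs - y) xs)"
    by (simp add: take_rev)
  ultimately show ?thesis by (cases "xs = []") (auto simp: hd_rev)
qed

lemma lead_hd_drop: "lead_run xs < length xs \<Longrightarrow> hd (drop (lead_run xs) xs) \<noteq> hd xs"
proof -
  assume a: "lead_run xs < length xs"
  have d: "drop (lead_run xs) xs = dropWhile (\<lambda>c. c = hd xs) xs"
    unfolding lead_run_def by (simp add: dropWhile_eq_drop)
  have ne: "dropWhile (\<lambda>c. c = hd xs) xs \<noteq> []" unfolding d[symmetric] using a by simp
  show ?thesis using hd_dropWhile[OF ne] unfolding d by simp
qed

lemma trail_last_take: "trail_run xs < length xs \<Longrightarrow> last (take (length xs - trail_run xs) xs) \<noteq> last xs"
proof -
  assume a: "trail_run xs < length xs"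
  then have "lead_run (rev xs) < length (rev xs)" by (simp add: trail_run_rev)
  then have "hd (drop (lead_run (rev xs)) (rev xs)) \<noteq> hd (rev xs)" by (rule lead_hd_drop)
  moreover have "drop (lead_run (rev xs)) (rev xs) = rev (take (length xs - trail_run xs) xs)"
    using lead_run_le[of "rev xs"] by (simp add: rev_take trail_run_rev)
  moreover have "xs \<noteq> []" using a by (cases xs) simp_all
  moreover have "take (length xs - trail_run xs) xs \<noteq> []" using a by (cases xs) simp_all
  ultimately show ?thesis by (simp add: hd_rev)
qed

lemma admissible_bound: "admissible xs ts \<Longrightarrow> (runs xs + 1) div 2 \<le> length ts"
proof (induction rule: admissible.induct)
  case (terminate xs) then show ?case by simp
next
  case (peel xs x y ts)
  define m where "m = drop x (take (length xs - y) xs)"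
  define q where "q = drop (length xs - y) xs"
  have c1: "\<forall>c\<in>set (take x xs). c = hd xs" using peel take_lead by blast
  have c2: "\<forall>c\<in>set q. c = last xs" unfolding q_def using peel drop_trail by blast
  have r1: "runs (take x xs) \<le> 1" using c1 by (rule runs_const)
  have r2: "runs q \<le> 1" using c2 by (rule runs_const)
  have xy: "x + y \<le> length xs"
  proof (rule ccontr)
    assume nxy: "\<not> ?thesis"
    have eq: "drop x xs = drop (x - (length xs - y)) q" unfolding q_def using nxy by simp
    have "set (drop x xs) \<subseteq> set q" unfolding eq by (rule set_drop_subset)
    then have "\<forall>c\<in>set (drop x xs). c = last xs" using c2 by blast
    then have "runs (drop x xs) \<le> 1" by (rule runs_const)
    moreover have "runs (take x xs @ drop x xs) \<le> runs (take x xs) + runs (drop x xs)"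
      by (rule runs_append_le)
    ultimately have "runs xs \<le> 2" using r1 by simp
    then show False using peel by simp
  qed
  have D: "take x xs @ m @ q = xs"
  proof -
    have e1: "take (length xs - y) xs = take x (take (length xs - y) xs) @ m"
      unfolding m_def by (rule append_take_drop_id[symmetric])
    have mn: "min x (length xs - y) = x" using xy by simp
    have e2: "take x (take (length xs - y) xs) = take x xs" by (simp only: take_take mn)
    have E: "take (length xs - y) xs = take x xs @ m" using e1 unfolding e2 .
    from append_take_drop_id[of "length xs - y" xs] show ?thesis
      unfolding E append_assoc q_def .
  qed
  have "runs (take x xs @ (m @ q)) \<le> runs (take x xs) + runs (m @ q)" by (rule runs_append_le)
  then have "runs xs \<le> runs (take x xs) + runs (m @ q)" by (simp only: D)
  also have "\<dots> \<le> runs (take x xs) + (runs m + runs q)"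
    using runs_append_le[of m q] by simp
  finally have "runs xs \<le> runs m + 2" using r1 r2 by simp
  then show ?case using peel.IH unfolding m_def by simp
qed

lemma ceil_half: "nat \<lceil>real r / 2\<rceil> = (r + 1) div 2"
proof (cases "even r")
  case True
  then obtain k where "r = 2 * k" by (auto elim: evenE)
  then show ?thesis by simp
next
  case False
  then obtain k where k: "r = 2 * k + 1" by (auto elim: oddE)
  have "\<lceil>real r / 2\<rceil> = int k + 1"
    by (rule ceiling_unique) (simp_all add: k)
  then show ?thesis using k by simp
qed

lemma flash_main:
  "hi - lo = k \<Longrightarrow> 1 \<le> lo \<Longrightarrow> lo < hi \<Longrightarrow> hi \<le> length w + 1 \<Longrightarrow>
   length (flash w lo hi) = (runs (substr w lo hi) + 1) div 2 \<and>
   (\<forall>t\<in>set (flash w lo hi). set (fst t) \<subseteq> set (substr w lo hi))"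
proof (induction k arbitrary: lo hi rule: less_induct)
  case (less k lo hi)
  define sp where "sp = substr w lo hi"
  define l where "l = lead_run sp"
  define t where "t = trail_run sp"
  define \<sigma> where "\<sigma> = take l sp @ drop (length sp - t) sp"
  have len: "length sp = hi - lo" using "less.prems" by (simp add: sp_def substr_def)
  have ne: "sp \<noteq> []" using len "less.prems" by auto
  have l1: "1 \<le> l" "l \<le> length sp" using lead_run_pos[OF ne] lead_run_le[of sp] by (simp_all add: l_def)
  have t1: "1 \<le> t" "t \<le> length sp" using trail_run_pos[OF ne] trail_run_le[of sp] by (simp_all add: t_def)
  have subL: "substr w lo (lo + l) = take l sp"
    using l1 len by (simp add: sp_def substr_def min_def)
  have subR: "substr w (hi - t) hi = drop (length sp - t) sp"
    using t1 len "less.prems"(2-4) by (simp add: sp_def substr_def drop_take add.commute)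
  have sigma_sub: "set \<sigma> \<subseteq> set sp" unfolding \<sigma>_def
    using set_take_subset set_drop_subset by fastforce
  have cL: "\<forall>c\<in>set (take l sp). c = hd sp" using take_lead[of "lead_run sp" sp] unfolding l_def by simp
  have cR: "\<forall>c\<in>set (drop (length sp - t) sp). c = last sp" using drop_trail[of "trail_run sp" sp] unfolding t_def by simp
  have eq: "flash w lo hi = (if l = hi - lo then [(sp,0)]
      else if lo + l \<ge> hi - t then [(\<sigma>, 0)]
      else (\<sigma>, l) # flash w (lo + l) (hi - t))"
    using "less.prems" subL subR
    by (subst flash.simps) (simp add: Let_def sp_def[symmetric] l_def[symmetric] t_def[symmetric] \<sigma>_def)
  show ?case
  proof (cases "l = hi - lo")
    case True
    then have "take l sp = sp" using len by simp
    then have "runs sp \<le> 1" using runs_const[OF cL] by simp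
    then have "runs sp = 1" using runs_pos[OF ne] by simp
    then show ?thesis using True eq by (simp add: sp_def[symmetric])
  next
    case False
    note F = False
    show ?thesis
    proof (cases "lo + l \<ge> hi - t")
      case True
      have deq: "drop l sp = drop (l - (length sp - t)) (drop (length sp - t) sp)"
        using True len by simp
      have "set (drop l sp) \<subseteq> set (drop (length sp - t) sp)" unfolding deq by (rule set_drop_subset)
      then have "\<forall>c\<in>set (drop l sp). c = last sp" using cR by blast
      then have r2: "runs (drop l sp) \<le> 1" by (rule runs_const)
      have r1: "runs (take l sp) \<le> 1" using cL by (rule runs_const)
      have "runs (take l sp @ drop l sp) \<le> runs (take l sp) + runs (drop l sp)" by (rule runs_append_le)
      then have "runs sp \<le> 2" using r1 r2 by simp
      then have "runs sp = 1 \<or> runs sp = 2" using runs_pos[OF ne] by linarith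
      then have "(runs sp + 1) div 2 = 1" by auto
      then show ?thesis using F True eq sigma_sub by (simp add: sp_def[symmetric])
    next
      case False
      define m where "m = drop l (take (length sp - t) sp)"
      define q where "q = drop (length sp - t) sp"
      have lt: "l + t < length sp" using False len by simp
      have subM: "substr w (lo + l) (hi - t) = m"
        using lt len "less.prems"(2-4) by (simp add: sp_def substr_def m_def drop_take take_take min_def add_ac diff_diff_add)
      have IH: "length (flash w (lo + l) (hi - t)) = (runs m + 1) div 2 \<and>
         (\<forall>u\<in>set (flash w (lo + l) (hi - t)). set (fst u) \<subseteq> set m)"
      proof -
        have "length (flash w (lo + l) (hi - t)) = (runs (substr w (lo + l) (hi - t)) + 1) div 2 \<and>
         (\<forall>u\<in>set (flash w (lo + l) (hi - t)). set (fst u) \<subseteq> set (substr w (lo + l) (hi - t)))"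
          by (rule "less.IH"[OF _ refl]) (use "less.prems" lt len l1 t1 in simp_all)
        then show ?thesis unfolding subM .
      qed
      have mne: "m \<noteq> []" using lt unfolding m_def by simp
      have qne: "q \<noteq> []" using t1 unfolding q_def by simp
      have tne: "take l sp \<noteq> []" using l1 ne by simp
      have D: "take l sp @ m @ q = sp"
      proof -
        have e1: "take (length sp - t) sp = take l (take (length sp - t) sp) @ m"
          unfolding m_def by (rule append_take_drop_id[symmetric])
        have mn: "min l (length sp - t) = l" using lt by simp
        have e2: "take l (take (length sp - t) sp) = take l sp" by (simp only: take_take mn)
        have E: "take (length sp - t) sp = take l sp @ m" using e1 unfolding e2 .
        from append_take_drop_id[of "length sp - t" sp] show ?thesis
          unfolding E append_assoc q_def .
      qed
      have dl: "drop l sp = m @ q"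
      proof -
        have "drop l (take l sp @ m @ q) = m @ q" using l1 by simp
        then show ?thesis by (simp only: D)
      qed
      have hm: "hd m \<noteq> hd sp"
      proof -
        have "hd (drop l sp) \<noteq> hd sp" using lead_hd_drop[of sp] lt unfolding l_def by simp
        then show ?thesis using mne unfolding dl by simp
      qed
      have lm: "last m \<noteq> last sp"
      proof -
        have "last (take (length sp - t) sp) \<noteq> last sp"
          using trail_last_take[of sp] lt unfolding t_def by simp
        moreover have "last m = last (take (length sp - t) sp)" unfolding m_def
          using lt by (simp add: last_drop)
        ultimately show ?thesis by simp
      qed
      have hq: "hd q = last sp" using cR hd_in_set[OF qne] unfolding q_def by blast
      have lL: "last (take l sp) = hd sp" using cL last_in_set[OF tne] by blast
      have rL: "runs (take l sp) = 1" using runs_const[OF cL] runs_pos[OF tne] by simp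
      have rq: "runs q = 1" using runs_const[OF cR] runs_pos[OF qne] unfolding q_def by simp
      have "runs (take l sp @ (m @ q)) = runs (take l sp) + runs (m @ q)"
        by (rule runs_append_eq) (use lL hm mne in simp)
      then have "runs sp = runs (take l sp) + runs (m @ q)" by (simp only: D)
      also have "runs (m @ q) = runs m + runs q"
        using lm hq by (simp add: runs_append_eq)
      finally have rs: "runs sp = runs m + 2" using rL rq by simp
      have "set (take l sp @ m @ q) = set sp" by (simp only: D)
      then have msub: "set m \<subseteq> set sp" by auto
      have "length (flash w lo hi) = 1 + (runs m + 1) div 2" using F False eq IH by simp
      also have "\<dots> = (runs sp + 1) div 2" using rs by simp
      finally have A: "length (flash w lo hi) = (runs sp + 1) div 2" .
      have B: "\<forall>t\<in>set (flash w lo hi). set (fst t) \<subseteq> set sp"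
        using F False eq IH sigma_sub msub by auto
      show ?thesis using A B unfolding sp_def by (rule conjI)
    qed
  qed
qed

theorem theorem6p4:
  fixes s :: "'a list"
  assumes "s \<noteq> []"
  shows "(\<forall>ts. admissible s ts \<longrightarrow> nat \<lceil>real (runs s) / 2\<rceil> \<le> length ts)
       \<and> length (filter (\<lambda>t. t \<noteq> sentinel_token) (flashback s)) = nat \<lceil>real (runs s) / 2\<rceil>"
proof
  show "\<forall>ts. admissible s ts \<longrightarrow> nat \<lceil>real (runs s) / 2\<rceil> \<le> length ts"
  proof (intro allI impI)
    fix ts assume "admissible s ts"
    from admissible_bound[OF this] show "nat \<lceil>real (runs s) / 2\<rceil> \<le> length ts"
      by (simp add: ceil_half)
  qed
next
  define w where "w = At # map Sym s @ [Dollar]"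
  define n where "n = length s"
  have n1: "n \<ge> 1" using assms by (simp add: n_def Suc_le_eq)
  have lw: "lead_run w = 1" using assms by (cases s) (auto simp: lead_run_def w_def)
  have tw0: "takeWhile (\<lambda>c. c = Dollar) (rev (map Sym s) @ [At]) = []"
    by (cases "rev s") (auto simp: rev_map)
  have tw: "trail_run w = 1" using tw0 by (simp add: trail_run_def w_def)
  have hw1: "length w = Suc (Suc n)" by (simp add: w_def n_def)
  have hw2: "take (Suc 0) w = [At]" by (simp add: w_def)
  have hw3: "drop (Suc n) w = [Dollar]" by (simp add: w_def n_def)
  have fb0: "flashback s = ([At, Dollar], 1) # flash w (Suc 1) (n + 3 - 1)"
    unfolding flashback_def w_def[symmetric] n_def[symmetric]
    using n1 by (subst flash.simps) (simp add: Let_def substr_def lw tw hw1 hw2 hw3)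
  have a1: "Suc 1 = (2::nat)" by simp
  have a2: "n + 3 - 1 = n + 2" by simp
  have fb: "flashback s = ([At, Dollar], 1) # flash w 2 (n + 2)"
    using fb0 unfolding a1 a2 .
  have sm: "substr w 2 (n + 2) = map Sym s" by (simp add: substr_def w_def n_def)
  have fm: "length (flash w 2 (n + 2)) = (runs s + 1) div 2 \<and>
      (\<forall>t\<in>set (flash w 2 (n + 2)). set (fst t) \<subseteq> set (map Sym s))"
    using flash_main[where w=w and lo=2 and hi="n+2", OF refl] n1 sm assms
    by (simp add: w_def n_def runs_def remdups_adj_map_injective inj_def)
  have "\<forall>t\<in>set (flash w 2 (n + 2)). t \<noteq> sentinel_token"
  proof
    fix t assume "t \<in> set (flash w 2 (n + 2))"
    then have "set (fst t) \<subseteq> set (map Sym s)" using fm by blast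
    then have "At \<notin> set (fst t)" by auto
    then show "t \<noteq> sentinel_token" by (auto simp: sentinel_token_def)
  qed
  then have "filter (\<lambda>t. t \<noteq> sentinel_token) (flashback s) = flash w 2 (n + 2)"
    unfolding fb by (simp add: sentinel_token_def)
  then show "length (filter (\<lambda>t. t \<noteq> sentinel_token) (flashback s)) = nat \<lceil>real (runs s) / 2\<rceil>"
    using fm by (simp add: ceil_half)
qed

end
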